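(* Let $(X,d)$ be a compact metric space. If $X$ admits a conical bicombing, then $X$ admits an $\mathrm{Iso}(X)$-equivariant reversible conical bicombing.
   Context: A bicombing on $(X,d)$ is a map $\sigma\colon X\times X\times[0,1]\to X$ such that each $\sigma_{xy}:=\sigma(x,y,\cdot)$ is a geodesic from $x$ to $y$ ($\sigma_{xy}(0)=x$, $\sigma_{xy}(1)=y$, $d(\sigma_{xy}(s),\sigma_{xy}(t))=|s-t|d(x,y)$); it is conical if $d(\sigma_{xy}(t),\sigma_{x'y'}(t))\le(1-t)d(x,x')+t\,d(y,y')$ for all $x,y,x',y'$, $t\in[0,1]$, and reversible if $\sigma_{xy}(t)=\sigma_{yx}(1-t)$. It is $\mathrm{Iso}(X)$-equivariant if $f(\sigma(x,y,t))=\sigma(f(x),f(y),t)$ for all $(x,y,t)\in X\times X\times[0,1]$ and every isometry $f\colon X\to X$. *)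

theory Defs
  imports "HOL-Analysis.Analysis"
begin

text \<open>Values of sigma outside [0,1] are irrelevant.\<close>
definition bicombing :: "('a::metric_space \<Rightarrow> 'a \<Rightarrow> real \<Rightarrow> 'a) \<Rightarrow> bool" where
  "bicombing \<sigma> \<longleftrightarrow>
     (\<forall>x y. \<sigma> x y 0 = x \<and> \<sigma> x y 1 = y \<and>
        (\<forall>s\<in>{0..1}. \<forall>t\<in>{0..1}. dist (\<sigma> x y s) (\<sigma> x y t) = \<bar>s - t\<bar> * dist x y))"

definition conical_bicombing :: "('a::metric_space \<Rightarrow> 'a \<Rightarrow> real \<Rightarrow> 'a) \<Rightarrow> bool" where
  "conical_bicombing \<sigma> \<longleftrightarrow> bicombing \<sigma> \<and>
     (\<forall>x y x' y'. \<forall>t\<in>{0..1}.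
        dist (\<sigma> x y t) (\<sigma> x' y' t) \<le> (1 - t) * dist x x' + t * dist y y')"

definition reversible_bicombing :: "('a::metric_space \<Rightarrow> 'a \<Rightarrow> real \<Rightarrow> 'a) \<Rightarrow> bool" where
  "reversible_bicombing \<sigma> \<longleftrightarrow> (\<forall>x y. \<forall>t\<in>{0..1}. \<sigma> x y t = \<sigma> y x (1 - t))"

definition isometry :: "('a::metric_space \<Rightarrow> 'a) \<Rightarrow> bool" where
  "isometry f \<longleftrightarrow> bij f \<and> (\<forall>x y. dist (f x) (f y) = dist x y)"

definition iso_equivariant :: "('a::metric_space \<Rightarrow> 'a \<Rightarrow> real \<Rightarrow> 'a) \<Rightarrow> bool" where
  "iso_equivariant \<sigma> \<longleftrightarrow>
     (\<forall>f. isometry f \<longrightarrow> (\<forall>x y. \<forall>t\<in>{0..1}. f (\<sigma> x y t) = \<sigma> (f x) (f y) t))"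

end

theory Submission
  imports Defs
begin



definition cmid :: "('a::metric_space \<Rightarrow> 'a \<Rightarrow> 'a) \<Rightarrow> bool" where
  "cmid \<mu> \<longleftrightarrow> (\<forall>a. \<mu> a a = a) \<and>
     (\<forall>a b a' b'. dist (\<mu> a b) (\<mu> a' b') \<le> (dist a a' + dist b b') / 2)"

definition isB :: "('a::metric_space \<times> 'a \<times> real \<Rightarrow> 'a) \<Rightarrow> bool" where
  "isB F \<longleftrightarrow> (\<forall>x y. F (x,y,0) = x \<and> F (x,y,1) = y) \<and>
     (\<forall>x y s t. s \<in> {0..1} \<longrightarrow> t \<in> {0..1} \<longrightarrow> dist (F (x,y,s)) (F (x,y,t)) = \<bar>s - t\<bar> * dist x y) \<and>
     (\<forall>x y x' y' t. t \<in> {0..1} \<longrightarrow> dist (F (x,y,t)) (F (x',y',t)) \<le> (1 - t) * dist x x' + t * dist y y')"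

definition Mop :: "('a \<Rightarrow> 'a \<Rightarrow> 'a) \<Rightarrow> ('b \<Rightarrow> 'a) \<Rightarrow> ('b \<Rightarrow> 'a) \<Rightarrow> 'b \<Rightarrow> 'a" where
  "Mop \<mu> F1 F2 = (\<lambda>p. \<mu> (F1 p) (F2 p))"

definition act :: "('a \<Rightarrow> 'a) \<Rightarrow> ('a \<times> 'a \<times> real \<Rightarrow> 'a) \<Rightarrow> 'a \<times> 'a \<times> real \<Rightarrow> 'a" where
  "act g F = (\<lambda>(x,y,t). g (F (inv g x, inv g y, t)))"

definition rv :: "('a \<times> 'a \<times> real \<Rightarrow> 'a) \<Rightarrow> 'a \<times> 'a \<times> real \<Rightarrow> 'a" where
  "rv F = (\<lambda>(x,y,t). F (y, x, 1 - t))"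

lemma cmid_of_conical:
  assumes "conical_bicombing \<sigma>"
  shows "cmid (\<lambda>a b. \<sigma> a b (1/2))"
proof -
  have bc: "bicombing \<sigma>" using assms unfolding conical_bicombing_def by blast
  have "\<sigma> a a (1/2) = a" for a
  proof -
    have h: "(1/2::real) \<in> {0..1}" "(0::real) \<in> {0..1}" by auto
    have "dist (\<sigma> a a (1/2)) (\<sigma> a a 0) = \<bar>1/2 - 0\<bar> * dist a a"
      using bc h unfolding bicombing_def by blast
    then show ?thesis using bc unfolding bicombing_def by simp
  qed
  moreover have "dist (\<sigma> a b (1/2)) (\<sigma> a' b' (1/2)) \<le> (dist a a' + dist b b') / 2" for a b a' b'
  proof -
    have h: "(1/2::real) \<in> {0..1}" by auto
    have "dist (\<sigma> a b (1/2)) (\<sigma> a' b' (1/2)) \<le> (1 - 1/2) * dist a a' + 1/2 * dist b b'"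
      using assms h unfolding conical_bicombing_def by blast
    then show ?thesis by simp
  qed
  ultimately show ?thesis unfolding cmid_def by blast
qed

lemma cmid_dist:
  assumes "cmid \<mu>"
  shows "dist (\<mu> a b) c \<le> (dist a c + dist b c) / 2"
proof -
  have "\<mu> c c = c" and "dist (\<mu> a b) (\<mu> c c) \<le> (dist a c + dist b c) / 2"
    using assms unfolding cmid_def by blast+
  then show ?thesis by simp
qed

lemma isB_Mop:
  assumes m: "cmid \<mu>" and F1: "isB F1" and F2: "isB F2"
  shows "isB (Mop \<mu> F1 F2)"
proof -
  let ?F = "Mop \<mu> F1 F2"
  have mm: "\<mu> a a = a" for a using m unfolding cmid_def by blast
  have md: "dist (\<mu> a b) (\<mu> a' b') \<le> (dist a a' + dist b b') / 2" for a b a' b'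
    using m unfolding cmid_def by blast
  have e: "?F (x,y,0) = x \<and> ?F (x,y,1) = y" for x y
    using F1 F2 mm unfolding isB_def Mop_def by simp
  have le: "dist (?F (x,y,s)) (?F (x,y,t)) \<le> \<bar>s - t\<bar> * dist x y"
    if "s \<in> {0..1}" "t \<in> {0..1}" for x y s t
  proof -
    have "dist (?F (x,y,s)) (?F (x,y,t)) \<le> (dist (F1 (x,y,s)) (F1 (x,y,t)) + dist (F2 (x,y,s)) (F2 (x,y,t))) / 2"
      unfolding Mop_def by (rule md)
    also have "\<dots> = \<bar>s - t\<bar> * dist x y" using F1 F2 that unfolding isB_def by simp
    finally show ?thesis .
  qed
  have geo: "dist (?F (x,y,s)) (?F (x,y,t)) = \<bar>s - t\<bar> * dist x y"
    if "s \<in> {0..1}" "t \<in> {0..1}" for x y s t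
  proof -
    have ge: "dist (?F (x,y,a)) (?F (x,y,b)) \<ge> (b - a) * dist x y"
      if ab: "a \<in> {0..1}" "b \<in> {0..1}" "a \<le> b" for a b
    proof -
      have "dist x y \<le> dist x (?F (x,y,a)) + dist (?F (x,y,a)) (?F (x,y,b)) + dist (?F (x,y,b)) y"
        using dist_triangle[of x y "?F (x,y,a)"] dist_triangle[of "?F (x,y,a)" y "?F (x,y,b)"] by linarith
      also have "dist x (?F (x,y,a)) \<le> a * dist x y"
        using le[of 0 a x y] ab e[of x y] by (simp add: dist_commute)
      also have "dist (?F (x,y,b)) y \<le> (1 - b) * dist x y"
      proof -
        have "\<bar>b - 1\<bar> = 1 - b" using ab by simp
        then show ?thesis using le[of b 1 x y] ab e[of x y] by simp
      qed
      finally show ?thesis by (simp add: algebra_simps)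
    qed
    show ?thesis
    proof (cases "s \<le> t")
      case True
      then have "\<bar>s - t\<bar> = t - s" by simp
      then show ?thesis using ge[of s t] le[OF that, of x y] that True by simp
    next
      case False
      then have "\<bar>s - t\<bar> = s - t" by simp
      then show ?thesis using ge[of t s] le[OF that, of x y] that False by (simp add: dist_commute)
    qed
  qed
  have con: "dist (?F (x,y,t)) (?F (x',y',t)) \<le> (1 - t) * dist x x' + t * dist y y'"
    if "t \<in> {0..1}" for x y x' y' t
  proof -
    have "dist (?F (x,y,t)) (?F (x',y',t)) \<le> (dist (F1 (x,y,t)) (F1 (x',y',t)) + dist (F2 (x,y,t)) (F2 (x',y',t))) / 2"
      unfolding Mop_def by (rule md)
    also have "\<dots> \<le> ((1 - t) * dist x x' + t * dist y y' + ((1 - t) * dist x x' + t * dist y y')) / 2"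
      using F1 F2 that unfolding isB_def by (intro divide_right_mono add_mono) auto
    finally show ?thesis by simp
  qed
  show ?thesis unfolding isB_def using e geo con by blast
qed

lemma isometry_inv:
  assumes "isometry g" shows "isometry (inv g)"
proof -
  have b: "bij g" and d: "\<And>x y. dist (g x) (g y) = dist x y" using assms unfolding isometry_def by auto
  have "dist (inv g x) (inv g y) = dist x y" for x y
    using d[of "inv g x" "inv g y"] b by (simp add: bij_is_surj surj_f_inv_f)
  then show ?thesis unfolding isometry_def using b bij_imp_bij_inv by blast
qed

lemma isB_act:
  assumes g: "isometry g" and F: "isB F"
  shows "isB (act g F)"
proof -
  have b: "bij g" and d: "\<And>x y. dist (g x) (g y) = dist x y" using g unfolding isometry_def by auto
  have d': "\<And>x y. dist (inv g x) (inv g y) = dist x y" using isometry_inv[OF g] unfolding isometry_def by auto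
  have gi: "g (inv g x) = x" for x using b by (simp add: bij_is_surj surj_f_inv_f)
  have a1: "act g F (x,y,0) = x \<and> act g F (x,y,1) = y" for x y
    using F unfolding isB_def act_def by (simp add: gi)
  have a2: "dist (act g F (x,y,s)) (act g F (x,y,t)) = \<bar>s - t\<bar> * dist x y"
    if "s \<in> {0..1}" "t \<in> {0..1}" for x y s t
  proof -
    have "dist (F (inv g x, inv g y, s)) (F (inv g x, inv g y, t)) = \<bar>s - t\<bar> * dist (inv g x) (inv g y)"
      using F that unfolding isB_def by blast
    then show ?thesis unfolding act_def by (simp add: d d')
  qed
  have a3: "dist (act g F (x,y,t)) (act g F (x',y',t)) \<le> (1 - t) * dist x x' + t * dist y y'"
    if "t \<in> {0..1}" for x y x' y' t
  proof -
    have "dist (F (inv g x, inv g y, t)) (F (inv g x', inv g y', t)) \<le> (1 - t) * dist (inv g x) (inv g x') + t * dist (inv g y) (inv g y')"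
      using F that unfolding isB_def by blast
    then show ?thesis unfolding act_def by (simp add: d d')
  qed
  show ?thesis unfolding isB_def using a1 a2 a3 by blast
qed

lemma isB_rv:
  assumes F: "isB F" shows "isB (rv F)"
proof -
  have a: "rv F (x,y,0) = x \<and> rv F (x,y,1) = y" for x y using F unfolding isB_def rv_def by simp
  have b: "dist (rv F (x,y,s)) (rv F (x,y,t)) = \<bar>s - t\<bar> * dist x y" if "s \<in> {0..1}" "t \<in> {0..1}" for x y s t
    using F that unfolding isB_def rv_def by (auto simp: dist_commute abs_minus_commute)
  have c: "dist (rv F (x,y,t)) (rv F (x',y',t)) \<le> (1 - t) * dist x x' + t * dist y y'" if "t \<in> {0..1}" for x y x' y' t
  proof -
    have h: "1 - t \<in> {0..1}" using that by auto
    have "dist (F (y,x,1-t)) (F (y',x',1-t)) \<le> (1 - (1-t)) * dist y y' + (1-t) * dist x x'"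
      using F h unfolding isB_def by blast
    then show ?thesis unfolding rv_def by (simp add: algebra_simps)
  qed
  show ?thesis unfolding isB_def using a b c by blast
qed



lemma cont_coord: "continuous_on UNIV (\<lambda>F::'i \<Rightarrow> 'b::topological_space. F p)"
  by simp

lemma closed_imp_const: "(P \<Longrightarrow> closed {x. Q x}) \<Longrightarrow> closed {x. P \<longrightarrow> Q x}"
  by (cases P) simp_all

lemma closed_isB: "closed {F::'a::metric_space \<times> 'a \<times> real \<Rightarrow> 'a. isB F}"
proof -
  have c1: "closed {F::'a \<times> 'a \<times> real \<Rightarrow> 'a. \<forall>x y. F (x,y,0) = x \<and> F (x,y,1) = y}"
    by (intro closed_Collect_all closed_Collect_conj closed_Collect_eq cont_coord continuous_on_const)
  have c2: "closed {F::'a \<times> 'a \<times> real \<Rightarrow> 'a. \<forall>x y s t. s \<in> {0..1} \<longrightarrow> t \<in> {0..1} \<longrightarrow> dist (F (x,y,s)) (F (x,y,t)) = \<bar>s - t\<bar> * dist x y}"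
    by (intro closed_Collect_all closed_imp_const closed_Collect_eq continuous_on_dist cont_coord continuous_on_const)
  have c3: "closed {F::'a \<times> 'a \<times> real \<Rightarrow> 'a. \<forall>x y x' y' t. t \<in> {0..1} \<longrightarrow> dist (F (x,y,t)) (F (x',y',t)) \<le> (1 - t) * dist x x' + t * dist y y'}"
    by (intro closed_Collect_all closed_imp_const closed_Collect_le continuous_on_dist cont_coord continuous_on_const)
  have "{F::'a \<times> 'a \<times> real \<Rightarrow> 'a. isB F} = {F. \<forall>x y. F (x,y,0) = x \<and> F (x,y,1) = y} \<inter>
     ({F. \<forall>x y s t. s \<in> {0..1} \<longrightarrow> t \<in> {0..1} \<longrightarrow> dist (F (x,y,s)) (F (x,y,t)) = \<bar>s - t\<bar> * dist x y} \<inter>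
     {F. \<forall>x y x' y' t. t \<in> {0..1} \<longrightarrow> dist (F (x,y,t)) (F (x',y',t)) \<le> (1 - t) * dist x x' + t * dist y y'})"
    unfolding isB_def Collect_conj_eq by (rule refl)
  then show ?thesis by (simp only: closed_Int c1 c2 c3)
qed

lemma compact_fun_UNIV:
  assumes "compact (UNIV :: 'a::topological_space set)"
  shows "compact (UNIV :: ('i \<Rightarrow> 'a) set)"
proof -
  have "compact_space (euclidean :: 'a topology)"
    using assms unfolding compact_space_def by simp
  then have "compact_space (product_topology (\<lambda>i::'i. euclidean :: 'a topology) UNIV)"
    by (subst compact_space_product_topology) simp
  then have "compact_space (euclidean :: ('i \<Rightarrow> 'a) topology)"
    by (simp add: euclidean_product_topology)
  then show ?thesis unfolding compact_space_def by simp
qed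

lemma open_near:
  fixes F :: "'i \<Rightarrow> 'a::metric_space"
  assumes "finite P"
  shows "open {G. \<forall>q\<in>P. G q \<in> ball (F q) d}"
  using product_topology_basis'[of P "\<lambda>q. ball (F q) d" id] assms by simp



lemma isB_lip:
  fixes F :: "'a::metric_space \<times> 'a \<times> real \<Rightarrow> 'a"
  assumes F: "isB F" and b: "\<And>x y::'a. dist x y \<le> b"
    and p: "p \<in> UNIV \<times> UNIV \<times> {0..1}" and q: "q \<in> UNIV \<times> UNIV \<times> {0..1}"
  shows "dist (F p) (F q) \<le> (b + 2) * dist p q"
proof -
  obtain x y s where ps: "p = (x,y,s)" by (cases p) auto
  obtain x' y' t where qs: "q = (x',y',t)" by (cases q) auto
  have s: "s \<in> {0..1}" and t: "t \<in> {0..1}" using p q ps qs by auto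
  have b0: "0 \<le> b" using b[of x x] by simp
  have d1: "dist x x' \<le> dist p q" using dist_fst_le[of p q] ps qs by simp
  have d2: "dist y y' \<le> dist p q" using dist_fst_le[of "snd p" "snd q"] dist_snd_le[of p q] ps qs by simp
  have d3: "dist s t \<le> dist p q" using dist_snd_le[of "snd p" "snd q"] dist_snd_le[of p q] ps qs by simp
  have "dist (F p) (F q) \<le> dist (F (x,y,s)) (F (x,y,t)) + dist (F (x,y,t)) (F (x',y',t))"
    unfolding ps qs by (rule dist_triangle)
  also have "dist (F (x,y,s)) (F (x,y,t)) = \<bar>s - t\<bar> * dist x y" using F s t unfolding isB_def by blast
  also have "dist (F (x,y,t)) (F (x',y',t)) \<le> (1 - t) * dist x x' + t * dist y y'" using F t unfolding isB_def by blast
  also have "\<bar>s - t\<bar> * dist x y \<le> dist p q * b"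
    using d3 b[of x y] b0 by (simp add: dist_real_def mult_mono)
  also have "(1 - t) * dist x x' \<le> dist p q"
  proof -
    have "(1 - t) * dist x x' \<le> 1 * dist x x'" using t by (intro mult_right_mono) auto
    then show ?thesis using d1 by simp
  qed
  also have "t * dist y y' \<le> dist p q"
  proof -
    have "t * dist y y' \<le> 1 * dist y y'" using t by (intro mult_right_mono) auto
    then show ?thesis using d2 by simp
  qed
  finally show ?thesis by (simp add: algebra_simps)
qed

lemma zorn_min:
  assumes "\<And>C. C \<subseteq> A \<Longrightarrow> (\<forall>X\<in>C. \<forall>Y\<in>C. X \<subseteq> Y \<or> Y \<subseteq> X) \<Longrightarrow> \<exists>L\<in>A. \<forall>X\<in>C. L \<subseteq> X"
  shows "\<exists>M\<in>A. \<forall>X\<in>A. X \<subseteq> M \<longrightarrow> X = M"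
proof -
  have "\<exists>U\<in>uminus ` A. \<forall>X\<in>C. X \<subseteq> U" if ch: "subset.chain (uminus ` A) C" for C
  proof -
    have C1: "C \<subseteq> uminus ` A" and C2: "\<forall>X\<in>C. \<forall>Y\<in>C. X \<subseteq> Y \<or> Y \<subseteq> X"
      using ch unfolding subset_chain_def by simp_all
    have a1: "uminus ` C \<subseteq> A"
    proof
      fix Z assume "Z \<in> uminus ` C"
      then obtain X where "X \<in> C" "Z = - X" by auto
      then obtain W where "W \<in> A" "X = - W" using C1 by auto
      then show "Z \<in> A" using \<open>Z = - X\<close> by simp
    qed
    have a2: "\<forall>X\<in>uminus ` C. \<forall>Y\<in>uminus ` C. X \<subseteq> Y \<or> Y \<subseteq> X"
    proof (intro ballI)
      fix X Y assume "X \<in> uminus ` C" "Y \<in> uminus ` C"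
      then obtain X' Y' where "X' \<in> C" "Y' \<in> C" "X = - X'" "Y = - Y'" by auto
      then have "X' \<subseteq> Y' \<or> Y' \<subseteq> X'" using C2 by blast
      then show "X \<subseteq> Y \<or> Y \<subseteq> X" using \<open>X = - X'\<close> \<open>Y = - Y'\<close> by blast
    qed
    obtain L where L1: "L \<in> A" and L2: "\<forall>X\<in>uminus ` C. L \<subseteq> X" using assms[OF a1 a2] by auto
    have "\<forall>X\<in>C. X \<subseteq> - L"
    proof
      fix X assume "X \<in> C"
      then have "L \<subseteq> - X" using L2 by auto
      then show "X \<subseteq> - L" by auto
    qed
    moreover have "- L \<in> uminus ` A" using L1 by auto
    ultimately show ?thesis by auto
  qed
  from subset_Zorn[of "uminus ` A", OF this]
  obtain M' where M'1: "M' \<in> uminus ` A" and M'2: "\<forall>X\<in>uminus ` A. M' \<subseteq> X \<longrightarrow> X = M'"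
    by blast
  then obtain M where M: "M \<in> A" "M' = - M" by auto
  have "\<forall>X\<in>A. X \<subseteq> M \<longrightarrow> X = M"
  proof (intro ballI impI)
    fix X assume "X \<in> A" "X \<subseteq> M"
    then have "- X \<in> uminus ` A" "M' \<subseteq> - X" using M by auto
    then have "- X = M'" using M'2 by auto
    then show "X = M" using M by simp
  qed
  then show ?thesis using M by auto
qed

lemma avg_in:
  assumes cl: "\<And>F1 F2. F1 \<in> K \<Longrightarrow> F2 \<in> K \<Longrightarrow> Mop \<mu> F1 F2 \<in> K"
    and "base \<in> K" "set xs \<subseteq> K"
  shows "foldr (Mop \<mu>) xs base \<in> K"
  using assms(2,3) by (induction xs) (auto intro: cl)

lemma avg_bound:
  fixes \<mu> :: "'a::metric_space \<Rightarrow> 'a \<Rightarrow> 'a"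
  assumes m: "cmid \<mu>"
    and cl: "\<And>F1 F2. F1 \<in> K \<Longrightarrow> F2 \<in> K \<Longrightarrow> Mop \<mu> F1 F2 \<in> K"
    and base: "base \<in> K" and xs: "set xs \<subseteq> K"
    and Dm: "\<And>F. F \<in> K \<Longrightarrow> dist (F p) (k p) \<le> Dm"
    and near: "\<exists>F\<in>insert base (set xs). dist (F p) (k p) \<le> e"
    and e: "e \<le> Dm"
  shows "dist (foldr (Mop \<mu>) xs base p) (k p) \<le> Dm - (Dm - e) / 2 ^ length xs"
  using xs near
proof (induction xs)
  case Nil
  then show ?case by simp
next
  case (Cons a xs)
  let ?r = "foldr (Mop \<mu>) xs base"
  have aK: "a \<in> K" and xsK: "set xs \<subseteq> K" using Cons.prems by auto
  have rK: "?r \<in> K" using avg_in[OF cl base xsK] .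
  have step: "dist (foldr (Mop \<mu>) (a # xs) base p) (k p) \<le> (dist (a p) (k p) + dist (?r p) (k p)) / 2"
    using cmid_dist[OF m] by (simp add: Mop_def)
  have c0: "0 \<le> Dm - e" using e by simp
  have pw: "(2::real) \<le> 2 ^ Suc (length xs)"
  proof -
    have "(1::real) \<le> 2 ^ length xs" by simp
    then show ?thesis by simp
  qed
  have hh: "(Dm - e) / 2 ^ Suc (length xs) \<le> (Dm - e) / 2"
    using c0 pw by (intro divide_left_mono) auto
  show ?case
  proof (cases "dist (a p) (k p) \<le> e")
    case True
    have "dist (foldr (Mop \<mu>) (a # xs) base p) (k p) \<le> (e + Dm) / 2"
    proof -
      have "(dist (a p) (k p) + dist (?r p) (k p)) / 2 \<le> (e + Dm) / 2"
        using True Dm[OF rK] by (intro divide_right_mono add_mono) auto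
      then show ?thesis using step by linarith
    qed
    moreover have "(e + Dm) / 2 = Dm - (Dm - e) / 2" by (simp add: field_simps)
    moreover have "Dm - (Dm - e) / 2 \<le> Dm - (Dm - e) / 2 ^ length (a # xs)" using hh by simp
    ultimately show ?thesis by linarith
  next
    case False
    then have "\<exists>F\<in>insert base (set xs). dist (F p) (k p) \<le> e" using Cons.prems by auto
    then have "dist (?r p) (k p) \<le> Dm - (Dm - e) / 2 ^ length xs" using Cons.IH xsK by blast
    then have "dist (foldr (Mop \<mu>) (a # xs) base p) (k p) \<le> (Dm + (Dm - (Dm - e) / 2 ^ length xs)) / 2"
    proof -
      have "(dist (a p) (k p) + dist (?r p) (k p)) / 2 \<le> (Dm + (Dm - (Dm - e) / 2 ^ length xs)) / 2"
        using \<open>dist (?r p) (k p) \<le> _\<close> Dm[OF aK] by (intro divide_right_mono add_mono) auto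
      then show ?thesis using step by linarith
    qed
    then show ?thesis by (simp add: field_simps)
  qed
qed



lemma act_act_inv:
  assumes g: "isometry g"
  shows "act (inv g) k (inv g x, inv g y, t) = inv g (k (x, y, t))"
proof -
  have b: "bij g" using g unfolding isometry_def by simp
  have "inv (inv g) = g" using b by (simp add: inv_inv_eq)
  moreover have "g (inv g z) = z" for z using b by (simp add: bij_is_surj surj_f_inv_f)
  ultimately show ?thesis unfolding act_def by simp
qed

theorem lemma4p5:
  assumes "compact (UNIV :: 'a::metric_space set)"
    and "\<exists>\<sigma> :: 'a \<Rightarrow> 'a \<Rightarrow> real \<Rightarrow> 'a. conical_bicombing \<sigma>"
  shows "\<exists>\<sigma> :: 'a \<Rightarrow> 'a \<Rightarrow> real \<Rightarrow> 'a.
           conical_bicombing \<sigma> \<and> reversible_bicombing \<sigma> \<and> iso_equivariant \<sigma>"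
proof -
  obtain \<sigma>0 :: "'a \<Rightarrow> 'a \<Rightarrow> real \<Rightarrow> 'a" where s0: "conical_bicombing \<sigma>0" using assms(2) by blast
  define \<mu> where "\<mu> = (\<lambda>a b. \<sigma>0 a b (1/2))"
  have m: "cmid \<mu>" unfolding \<mu>_def by (rule cmid_of_conical[OF s0])
  define F0 :: "'a \<times> 'a \<times> real \<Rightarrow> 'a" where "F0 = (\<lambda>(x,y,t). \<sigma>0 x y t)"
  have F0: "isB F0" using s0 unfolding F0_def isB_def conical_bicombing_def bicombing_def by simp
  obtain b where b: "\<And>x y::'a. dist x y \<le> b"
  proof -
    have "bounded (UNIV :: 'a set)" using assms(1) by (rule compact_imp_bounded)
    then obtain c e where ce: "\<And>y::'a. dist c y \<le> e" unfolding bounded_def by auto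
    have "dist x y \<le> 2 * e" for x y :: 'a
      using dist_triangle2[of x y c] ce[of x] ce[of y] by (simp add: dist_commute)
    then show ?thesis using that by blast
  qed
  define Om :: "('a \<times> 'a \<times> real) set" where "Om = UNIV \<times> UNIV \<times> {0..1}"
  define BB :: "('a \<times> 'a \<times> real \<Rightarrow> 'a) set" where "BB = Collect isB"
  have compUNIV: "compact (UNIV :: ('a \<times> 'a \<times> real \<Rightarrow> 'a) set)"
    by (rule compact_fun_UNIV[OF assms(1)])
  have BBc: "compact BB"
    using compact_Int_closed[OF compUNIV closed_isB] unfolding BB_def by simp
  define CC where "CC = {K. K \<subseteq> BB \<and> closed K \<and> K \<noteq> {} \<and>
      (\<forall>g. isometry g \<longrightarrow> (\<forall>F\<in>K. act g F \<in> K)) \<and> (\<forall>F\<in>K. rv F \<in> K) \<and>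
      (\<forall>F1\<in>K. \<forall>F2\<in>K. Mop \<mu> F1 F2 \<in> K)}"
  have BBCC: "BB \<in> CC"
    unfolding CC_def BB_def using closed_isB F0 isB_act isB_rv isB_Mop[OF m] by blast
  have "\<exists>L\<in>CC. \<forall>X\<in>C. L \<subseteq> X" if C: "C \<subseteq> CC" "\<forall>X\<in>C. \<forall>Y\<in>C. X \<subseteq> Y \<or> Y \<subseteq> X" for C
  proof (cases "C = {}")
    case True
    then show ?thesis using BBCC by blast
  next
    case False
    have sub: "\<Inter>C \<subseteq> BB" using False C(1) unfolding CC_def by blast
    have cl: "closed (\<Inter>C)" using C(1) unfolding CC_def by (intro closed_Inter) blast
    have ne: "BB \<inter> \<Inter>C \<noteq> {}"
    proof (rule compact_imp_fip[OF BBc])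
      show "closed T" if "T \<in> C" for T using that C(1) unfolding CC_def by blast
      fix F' assume F': "finite F'" "F' \<subseteq> C"
      show "BB \<inter> \<Inter>F' \<noteq> {}"
      proof (cases "F' = {}")
        case True
        then show ?thesis using F0 unfolding BB_def by auto
      next
        case False
        have "subset.chain CC F'" unfolding subset_chain_def using F'(2) C by blast
        then have "\<Inter>F' \<in> F'" using Inter_in_chain[OF F'(1) False] by blast
        then have "\<Inter>F' \<in> CC" using F'(2) C(1) by blast
        then show ?thesis unfolding CC_def by blast
      qed
    qed
    have "\<Inter>C \<in> CC"
      unfolding CC_def using sub cl ne C(1) unfolding CC_def by blast
    then show ?thesis by blast
  qed
  then obtain K where KC: "K \<in> CC" and Kmin: "\<forall>X\<in>CC. X \<subseteq> K \<longrightarrow> X = K"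
    using zorn_min[of CC] by blast
  have KB: "K \<subseteq> BB" and Kcl: "closed K" and Kne: "K \<noteq> {}"
    and Kact: "\<And>g F. isometry g \<Longrightarrow> F \<in> K \<Longrightarrow> act g F \<in> K"
    and Krv: "\<And>F. F \<in> K \<Longrightarrow> rv F \<in> K"
    and KM: "\<And>F1 F2. F1 \<in> K \<Longrightarrow> F2 \<in> K \<Longrightarrow> Mop \<mu> F1 F2 \<in> K"
    using KC unfolding CC_def by blast+
  have allEq: "\<forall>F\<in>K. \<forall>k\<in>K. \<forall>p\<in>Om. F p = k p"
  proof (rule ccontr)
    assume "\<not> (\<forall>F\<in>K. \<forall>k\<in>K. \<forall>p\<in>Om. F p = k p)"
    then obtain F1 k1 p1 where F1: "F1 \<in> K" and k1: "k1 \<in> K" and p1: "p1 \<in> Om" and ne1: "F1 p1 \<noteq> k1 p1"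
      by blast
    define Dset where "Dset = (\<lambda>(F,k,p). dist (F p) (k p)) ` (K \<times> K \<times> Om)"
    define Dm where "Dm = Sup Dset"
    have mem: "dist (F p) (k p) \<in> Dset" if "F \<in> K" "k \<in> K" "p \<in> Om" for F k p
      unfolding Dset_def using that by (intro image_eqI[of _ _ "(F,k,p)"]) auto
    have bdd: "bdd_above Dset"
      unfolding Dset_def by (rule bdd_aboveI[of _ b]) (auto simp: b)
    have Dup: "dist (F p) (k p) \<le> Dm" if "F \<in> K" "k \<in> K" "p \<in> Om" for F k p
      unfolding Dm_def by (rule cSup_upper[OF mem[OF that] bdd])
    have Dpos: "0 < Dm"
    proof -
      have "0 < dist (F1 p1) (k1 p1)" using ne1 by simp
      then show ?thesis using Dup[OF F1 k1 p1] by linarith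
    qed
    have b0: "0 \<le> b" using b[of undefined undefined] by simp
    define \<eta> where "\<eta> = Dm / (8 * (b + 2))"
    have b2: "0 < b + 2" using b0 by linarith
    have eta0: "0 < \<eta>" unfolding \<eta>_def using Dpos b2 by (intro divide_pos_pos mult_pos_pos) auto
    have etab: "(b + 2) * \<eta> = Dm / 8" unfolding \<eta>_def using b2 by (simp add: field_simps)
    have compOm: "compact Om" unfolding Om_def
      by (intro compact_Times assms(1) compact_Icc)
    have tb: "\<forall>e>0. \<exists>k. finite k \<and> k \<subseteq> Om \<and> Om \<subseteq> (\<Union>x\<in>k. ball x e)"
      by (rule seq_compact_imp_totally_bounded[OF compact_imp_seq_compact[OF compOm]])
    from tb[rule_format, OF eta0] obtain P where Pall: "finite P \<and> P \<subseteq> Om \<and> Om \<subseteq> (\<Union>q\<in>P. ball q \<eta>)"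
      by (elim exE)
    then have Pfin: "finite P" and POm: "P \<subseteq> Om" and Pcov: "Om \<subseteq> (\<Union>q\<in>P. ball q \<eta>)" by simp_all
    define U where "U = (\<lambda>F::'a \<times> 'a \<times> real \<Rightarrow> 'a. {G. \<forall>q\<in>P. G q \<in> ball (F q) (Dm/8)})"
    have Kcomp: "compact K" using compact_Int_closed[OF compUNIV Kcl] by simp
    have cov: "K \<subseteq> (\<Union>F\<in>K. U F)"
    proof
      fix G assume "G \<in> K"
      moreover have "G \<in> U G" unfolding U_def using Dpos by simp
      ultimately show "G \<in> (\<Union>F\<in>K. U F)" by blast
    qed
    have opn: "open (U F)" if "F \<in> K" for F unfolding U_def by (rule open_near[OF Pfin])
    from compactE_image[OF Kcomp opn cov]
    obtain C' where C'K: "C' \<subseteq> K" and C'fin: "finite C'" and C'cov: "K \<subseteq> (\<Union>F\<in>C'. U F)" .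
    have near: "dist (F p) (k p) \<le> Dm / 2" if nF: "F \<in> K" and nk: "k \<in> K" and nU: "k \<in> U F" and np: "p \<in> Om" for F k p
    proof -
      obtain q where q: "q \<in> P" "p \<in> ball q \<eta>" using Pcov np by blast
      have qOm: "q \<in> Om" using q POm by blast
      have FB': "isB F" "isB k" using nF nk KB unfolding BB_def by blast+
      have pOm': "p \<in> UNIV \<times> UNIV \<times> {0..1}" "q \<in> UNIV \<times> UNIV \<times> {0..1}"
        using np qOm unfolding Om_def by auto
      have dpq: "dist p q < \<eta>" using q(2) by (simp add: dist_commute)
      have e1: "dist (F p) (F q) \<le> Dm / 8"
      proof -
        have "dist (F p) (F q) \<le> (b + 2) * dist p q" by (rule isB_lip[OF FB'(1) b pOm'])
        also have "\<dots> \<le> (b + 2) * \<eta>" using dpq b0 by (intro mult_left_mono) auto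
        finally show ?thesis using etab by simp
      qed
      have e3: "dist (k q) (k p) \<le> Dm / 8"
      proof -
        have "dist (k q) (k p) \<le> (b + 2) * dist q p" by (rule isB_lip[OF FB'(2) b pOm'(2) pOm'(1)])
        also have "\<dots> \<le> (b + 2) * \<eta>" using dpq b0 by (intro mult_left_mono) (auto simp: dist_commute)
        finally show ?thesis using etab by simp
      qed
      have e2: "dist (F q) (k q) < Dm / 8" using nU q(1) unfolding U_def by simp
      have "dist (F p) (k p) \<le> dist (F p) (F q) + dist (F q) (k q) + dist (k q) (k p)"
        using dist_triangle[of "F p" "k p" "F q"] dist_triangle[of "F q" "k p" "k q"] by linarith
      then show ?thesis using e1 e2 e3 Dpos by linarith
    qed
    obtain xs where xs: "set xs = C'" using finite_list[OF C'fin] by blast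
    obtain base where base: "base \<in> K" using Kne by blast
    define z where "z = foldr (Mop \<mu>) xs base"
    define r where "r = Dm - (Dm - Dm / 2) / 2 ^ length xs"
    have xsK: "set xs \<subseteq> K" using xs C'K by simp
    have zK: "z \<in> K" unfolding z_def by (rule avg_in[OF KM base xsK])
    have zb: "dist (z p) (k p) \<le> r" if zk: "k \<in> K" and zp: "p \<in> Om" for k p
    proof -
      obtain F where F: "F \<in> C'" "k \<in> U F" using C'cov zk by blast
      have "dist (F p) (k p) \<le> Dm / 2" using near[OF _ zk F(2) zp] F(1) C'K by blast
      then have nr: "\<exists>F\<in>insert base (set xs). dist (F p) (k p) \<le> Dm / 2" using F(1) xs by blast
      have dd: "dist (G p) (k p) \<le> Dm" if "G \<in> K" for G using Dup[OF that \<open>k \<in> K\<close> \<open>p \<in> Om\<close>] .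
      have ee: "Dm / 2 \<le> Dm" using Dpos by simp
      show ?thesis unfolding z_def r_def
        apply (rule avg_bound[where \<mu>=\<mu> and K=K and base=base and xs=xs and p=p and k=k and Dm=Dm and e="Dm/2"])
        using m KM base xsK nr ee dd by auto
    qed
    have rlt: "r < Dm" unfolding r_def using Dpos by simp
    define K' where "K' = {F\<in>K. \<forall>k\<in>K. \<forall>p\<in>Om. dist (F p) (k p) \<le> r}"
    have K'K: "K' \<subseteq> K" unfolding K'_def by blast
    have K'eq: "K' = K \<inter> (\<Inter>k\<in>K. \<Inter>p\<in>Om. {F. dist (F p) (k p) \<le> r})"
      unfolding K'_def by (simp add: set_eq_iff)
    have K'cl: "closed K'" unfolding K'eq
      by (intro closed_Int Kcl closed_INT ballI closed_Collect_le continuous_on_dist cont_coord continuous_on_const)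
    have K'act: "act g F \<in> K'" if g: "isometry g" and F: "F \<in> K'" for g F
    proof -
      have "act g F \<in> K" using Kact[OF g] F K'K by blast
      moreover have "dist (act g F p) (k p) \<le> r" if k: "k \<in> K" and p: "p \<in> Om" for k p
      proof -
        obtain x y t where pxyt: "p = (x,y,t)" by (cases p) auto
        have t: "t \<in> {0..1}" using p pxyt unfolding Om_def by auto
        have k': "act (inv g) k \<in> K" using Kact[OF isometry_inv[OF g] k] .
        have p': "(inv g x, inv g y, t) \<in> Om" using t unfolding Om_def by auto
        have d: "dist (g u) (g v) = dist u v" for u v using g unfolding isometry_def by blast
        have gi: "g (inv g w) = w" for w using g unfolding isometry_def by (simp add: bij_is_surj surj_f_inv_f)
        have "dist (act g F p) (k p) = dist (g (F (inv g x, inv g y, t))) (g (inv g (k (x,y,t))))"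
          unfolding pxyt act_def by (simp add: gi)
        also have "\<dots> = dist (F (inv g x, inv g y, t)) (act (inv g) k (inv g x, inv g y, t))"
          by (simp add: d act_act_inv[OF g])
        also have "\<dots> \<le> r" using F k' p' unfolding K'_def by blast
        finally show ?thesis .
      qed
      ultimately show ?thesis unfolding K'_def by blast
    qed
    have K'rv: "rv F \<in> K'" if F: "F \<in> K'" for F
    proof -
      have "rv F \<in> K" using Krv F K'K by blast
      moreover have "dist (rv F p) (k p) \<le> r" if k: "k \<in> K" and p: "p \<in> Om" for k p
      proof -
        obtain x y t where pxyt: "p = (x,y,t)" by (cases p) auto
        have t: "t \<in> {0..1}" using p pxyt unfolding Om_def by auto
        have p': "(y, x, 1 - t) \<in> Om" using t unfolding Om_def by auto
        have "dist (rv F p) (k p) = dist (F (y, x, 1 - t)) (rv k (y, x, 1 - t))"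
          unfolding pxyt rv_def by simp
        also have "\<dots> \<le> r" using F Krv[OF k] p' unfolding K'_def by blast
        finally show ?thesis .
      qed
      ultimately show ?thesis unfolding K'_def by blast
    qed
    have K'M: "Mop \<mu> F1 F2 \<in> K'" if "F1 \<in> K'" "F2 \<in> K'" for F1 F2
    proof -
      have "Mop \<mu> F1 F2 \<in> K" using KM that K'K by blast
      moreover have "dist (Mop \<mu> F1 F2 p) (k p) \<le> r" if k: "k \<in> K" and p: "p \<in> Om" for k p
      proof -
        have c1: "dist (Mop \<mu> F1 F2 p) (k p) \<le> (dist (F1 p) (k p) + dist (F2 p) (k p)) / 2"
          unfolding Mop_def by (rule cmid_dist[OF m])
 have "dist (F1 p) (k p) \<le> r" "dist (F2 p) (k p) \<le> r"
          using \<open>F1 \<in> K'\<close> \<open>F2 \<in> K'\<close> k p unfolding K'_def by blast+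
        then have "(dist (F1 p) (k p) + dist (F2 p) (k p)) / 2 \<le> (r + r) / 2"
          by (intro divide_right_mono add_mono) auto
        from order_trans[OF c1 this] show ?thesis by simp
      qed
      ultimately show ?thesis unfolding K'_def by blast
    qed
    have zK': "z \<in> K'" unfolding K'_def using zK zb by blast
    have K'B: "K' \<subseteq> BB" using K'K KB by (rule order_trans)
    have K'ne: "K' \<noteq> {}" using zK' by blast
    have "K' \<in> CC"
      unfolding CC_def mem_Collect_eq
    proof (intro conjI allI impI ballI)
      show "K' \<subseteq> BB" by (rule K'B)
      show "closed K'" by (rule K'cl)
      show "K' \<noteq> {}" by (rule K'ne)
      show "act g F \<in> K'" if "isometry g" "F \<in> K'" for g F using K'act that by blast
      show "rv F \<in> K'" if "F \<in> K'" for F using K'rv that by blast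
      show "Mop \<mu> F1 F2 \<in> K'" if "F1 \<in> K'" "F2 \<in> K'" for F1 F2 using K'M that by blast
    qed
    then have K'K2: "K' = K" using Kmin K'K by blast
    have Dne: "Dset \<noteq> {}" using mem[OF F1 k1 p1] by blast
    have "\<exists>x\<in>Dset. r < x" using rlt less_cSup_iff[OF Dne bdd] unfolding Dm_def by blast
    then obtain tup where tup: "tup \<in> K \<times> K \<times> Om" "r < (\<lambda>(F,k,p). dist (F p) (k p)) tup"
      unfolding Dset_def by blast
    obtain F2 k2 p2 where tp: "tup = (F2, k2, p2)" by (cases tup) auto
    have F2: "F2 \<in> K" "k2 \<in> K" "p2 \<in> Om" "r < dist (F2 p2) (k2 p2)" using tup unfolding tp by auto
    have "F2 \<in> K'" using K'K2 F2(1) by simp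
    then have "dist (F2 p2) (k2 p2) \<le> r" using F2(2,3) unfolding K'_def by blast
    then show False using F2(4) by simp
  qed
  obtain F where FK: "F \<in> K" using Kne by blast
  define \<sigma> where "\<sigma> = (\<lambda>x y t. F (x, y, t))"
  have FB: "isB F" using FK KB unfolding BB_def by blast
  have c1: "conical_bicombing \<sigma>"
    using FB unfolding isB_def conical_bicombing_def bicombing_def \<sigma>_def by simp
  have c2: "reversible_bicombing \<sigma>"
    unfolding reversible_bicombing_def
  proof (intro allI ballI)
    fix x y and t :: real assume t: "t \<in> {0..1}"
    have "rv F (x,y,t) = F (x,y,t)" using allEq Krv[OF FK] FK t unfolding Om_def by blast
    then show "\<sigma> x y t = \<sigma> y x (1 - t)" unfolding \<sigma>_def rv_def by simp
  qed
  have c3: "iso_equivariant \<sigma>"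
    unfolding iso_equivariant_def
  proof (intro allI impI ballI)
    fix f :: "'a \<Rightarrow> 'a" and x y and t :: real assume f: "isometry f" and t: "t \<in> {0..1}"
    have "act f F (f x, f y, t) = F (f x, f y, t)" using allEq Kact[OF f FK] FK t unfolding Om_def by blast
    moreover have "inv f (f z) = z" for z using f unfolding isometry_def by (simp add: bij_is_inj)
    ultimately show "f (\<sigma> x y t) = \<sigma> (f x) (f y) t" unfolding \<sigma>_def act_def by simp
  qed
  show ?thesis using c1 c2 c3 by blast
qed

end
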